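(* Let $\langle A,\Omega,\mu,u_S,u_R\rangle$ be a normal form cheap talk game with $|\Omega|=n$. For any value $v$ such that some cheap talk equilibrium yields expected receiver's utility $v$, there exists a cheap talk equilibrium $(\pi,s)$ with $|\mathrm{supp}(\pi)|\le n+1$ whose expected receiver's utility is $v$.
   Context: A normal form cheap talk game $\langle A,\Omega,\mu,u_S,u_R\rangle$ consists of a finite action set $A$, a finite state set $\Omega$ of size $n$, a prior $\mu\in\Delta(\Omega)$, and utilities $u_S,u_R:\Omega\times A\to\mathbb{R}$. The sender observes $\omega\sim\mu$ and sends a signal from a discrete set $\Sigma$ ($|\Sigma|\ge n+1$) via $\pi:\Omega\to\Delta(\Sigma)$; the receiver acts via $s:\Sigma\to\Delta(A)$. $\mathrm{supp}(\pi)$ is the set of signals sent with positive probability; for $\sigma\in\mathrm{supp}(\pi)$, $p_\sigma$ is the Bayesian posterior. $(\pi,s)$ is a cheap talk equilibrium if (i) for every $\omega$, each signal sent with positive probability in $\omega$ maximizes $\mathbb{E}_{a\sim s[\sigma]}u_S(\omega,a)$ over $\sigma\in\mathrm{supp}(\pi)$; (ii) for every $\sigma\in\mathrm{supp}(\pi)$, $s[\sigma]$ is supported on maximizers of $\sum_\omega p_\sigma(\omega)u_R(\omega,a)$. Expected receiver's utility is $\mathbb{E}_{\omega\sim\mu,\sigma\sim\pi[\omega],a\sim s[\sigma]}u_R(\omega,a)$. *)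

theory Defs
  imports "HOL-Probability.Probability"
begin

definition supp_sig :: "'w pmf \<Rightarrow> ('w \<Rightarrow> 'sig pmf) \<Rightarrow> 'sig set" where
  "supp_sig \<mu> \<pi> = {\<sigma>. \<exists>\<omega>\<in>set_pmf \<mu>. \<sigma> \<in> set_pmf (\<pi> \<omega>)}"

definition posterior :: "'w::finite pmf \<Rightarrow> ('w \<Rightarrow> 'sig pmf) \<Rightarrow> 'sig \<Rightarrow> 'w \<Rightarrow> real" where
  "posterior \<mu> \<pi> \<sigma> \<omega> =
     pmf \<mu> \<omega> * pmf (\<pi> \<omega>) \<sigma> / (\<Sum>\<omega>'\<in>UNIV. pmf \<mu> \<omega>' * pmf (\<pi> \<omega>') \<sigma>)"

definition sender_util :: "('w \<Rightarrow> 'a \<Rightarrow> real) \<Rightarrow> ('sig \<Rightarrow> 'a pmf) \<Rightarrow> 'w \<Rightarrow> 'sig \<Rightarrow> real" where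
  "sender_util uS s \<omega> \<sigma> = measure_pmf.expectation (s \<sigma>) (\<lambda>a. uS \<omega> a)"

definition cheap_talk_eq ::
  "'w::finite pmf \<Rightarrow> ('w \<Rightarrow> 'a::finite \<Rightarrow> real) \<Rightarrow> ('w \<Rightarrow> 'a \<Rightarrow> real)
   \<Rightarrow> ('w \<Rightarrow> 'sig pmf) \<Rightarrow> ('sig \<Rightarrow> 'a pmf) \<Rightarrow> bool" where
  "cheap_talk_eq \<mu> uS uR \<pi> s \<longleftrightarrow>
     (\<forall>\<omega> \<sigma>. \<sigma> \<in> set_pmf (\<pi> \<omega>) \<longrightarrow>
        (\<forall>\<sigma>'\<in>supp_sig \<mu> \<pi>. sender_util uS s \<omega> \<sigma>' \<le> sender_util uS s \<omega> \<sigma>)) \<and>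
     (\<forall>\<sigma>\<in>supp_sig \<mu> \<pi>. \<forall>a\<in>set_pmf (s \<sigma>). \<forall>a'.
        (\<Sum>\<omega>\<in>UNIV. posterior \<mu> \<pi> \<sigma> \<omega> * uR \<omega> a') \<le>
        (\<Sum>\<omega>\<in>UNIV. posterior \<mu> \<pi> \<sigma> \<omega> * uR \<omega> a))"

definition receiver_utility ::
  "'w pmf \<Rightarrow> ('w \<Rightarrow> 'a \<Rightarrow> real) \<Rightarrow> ('w \<Rightarrow> 'sig pmf) \<Rightarrow> ('sig \<Rightarrow> 'a pmf) \<Rightarrow> real" where
  "receiver_utility \<mu> uR \<pi> s =
     measure_pmf.expectation
       (bind_pmf \<mu> (\<lambda>\<omega>. bind_pmf (\<pi> \<omega>) (\<lambda>\<sigma>. map_pmf (\<lambda>a. (\<omega>, a)) (s \<sigma>))))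
       (\<lambda>(\<omega>, a). uR \<omega> a)"

end

theory Submission
  imports Defs "HOL-Library.Product_Plus"
begin


lemma exp_density:
  fixes h :: "'b \<Rightarrow> real"
  shows "measure_pmf.expectation P h = integral\<^sup>L (count_space UNIV) (\<lambda>x. pmf P x * h x)"
  unfolding measure_pmf_eq_density
  by (subst integral_density) auto

lemma pmf_integrable_bdd:
  fixes \<phi> :: "'b \<Rightarrow> real"
  assumes "\<And>\<sigma>. \<sigma> \<in> set_pmf P \<Longrightarrow> \<bar>\<phi> \<sigma>\<bar> \<le> C"
  shows "integrable (measure_pmf P) \<phi>"
  by (intro measure_pmf.integrable_const_bound[where B=C]) (auto simp: AE_measure_pmf_iff assms)

lemma int_density_bdd:
  fixes h :: "'b \<Rightarrow> real"
  assumes "\<And>x. \<bar>h x\<bar> \<le> C"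
  shows "integrable (count_space UNIV) (\<lambda>x. pmf P x * h x)"
proof -
  have "integrable (measure_pmf P) h" using assms by (intro pmf_integrable_bdd) auto
  then show ?thesis unfolding measure_pmf_eq_density
    by (subst (asm) integrable_density) auto
qed

lemma exp_abs_le:
  fixes h :: "'b \<Rightarrow> real"
  assumes "\<And>x. \<bar>h x\<bar> \<le> C"
  shows "\<bar>measure_pmf.expectation P h\<bar> \<le> C"
proof -
  have C0: "0 \<le> C" using assms[of undefined] abs_ge_zero order_trans by blast
  have "\<bar>measure_pmf.expectation P h\<bar> \<le> measure_pmf.expectation P (\<lambda>x. \<bar>h x\<bar>)"
    by (rule integral_abs_bound)
  also have "\<dots> \<le> measure_pmf.expectation P (\<lambda>x. C)"
    using assms C0 by (intro integral_mono pmf_integrable_bdd[where C=C]) auto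
  also have "\<dots> = C" by simp
  finally show ?thesis .
qed

lemma integral_bind_pmf_bounded:
  fixes f :: "'b \<Rightarrow> real"
  assumes "\<And>x. \<bar>f x\<bar> \<le> B"
  shows "measure_pmf.expectation (bind_pmf M N) f = measure_pmf.expectation M (\<lambda>x. measure_pmf.expectation (N x) f)"
  unfolding measure_pmf_bind
  by (rule integral_bind[where K="count_space UNIV" and B=B and B'=1])
     (use assms in \<open>auto simp: measure_pmf_in_subprob_algebra\<close>)

lemma exp_finite_sum:
  fixes h :: "'w::finite \<Rightarrow> real"
  shows "measure_pmf.expectation \<mu> h = (\<Sum>\<omega>\<in>UNIV. pmf \<mu> \<omega> * h \<omega>)"
  by (subst integral_measure_pmf_real[where A=UNIV]) (auto simp: mult.commute)

lemma pmf_bind_fin: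
  fixes \<mu> :: "'w::finite pmf"
  shows "pmf (bind_pmf \<mu> \<pi>) \<sigma> = (\<Sum>\<omega>\<in>UNIV. pmf \<mu> \<omega> * pmf (\<pi> \<omega>) \<sigma>)"
  by (simp add: pmf_bind exp_finite_sum)

lemma RU:
  fixes \<mu> :: "'w::finite pmf" and uR :: "'w \<Rightarrow> 'a::finite \<Rightarrow> real"
  shows "receiver_utility \<mu> uR \<pi> s =
    (\<Sum>\<omega>\<in>UNIV. pmf \<mu> \<omega> * measure_pmf.expectation (\<pi> \<omega>) (\<lambda>\<sigma>. measure_pmf.expectation (s \<sigma>) (uR \<omega>)))"
proof -
  define U where "U = (\<Sum>\<omega>\<in>UNIV. \<Sum>a\<in>UNIV. \<bar>uR \<omega> a\<bar>)"
  have U: "\<bar>uR \<omega> a\<bar> \<le> U" for \<omega> a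
  proof -
    have "\<bar>uR \<omega> a\<bar> \<le> (\<Sum>a\<in>UNIV. \<bar>uR \<omega> a\<bar>)" by (rule member_le_sum) auto
    also have "\<dots> \<le> U" unfolding U_def by (rule member_le_sum) (auto intro: sum_nonneg)
    finally show ?thesis .
  qed
  have U2: "\<bar>(case p of (\<omega>, a) \<Rightarrow> uR \<omega> a)\<bar> \<le> U" for p by (cases p) (simp add: U)
  have "receiver_utility \<mu> uR \<pi> s = measure_pmf.expectation \<mu> (\<lambda>\<omega>.
      measure_pmf.expectation (bind_pmf (\<pi> \<omega>) (\<lambda>\<sigma>. map_pmf (\<lambda>a. (\<omega>, a)) (s \<sigma>))) (\<lambda>(\<omega>, a). uR \<omega> a))"
    unfolding receiver_utility_def by (rule integral_bind_pmf_bounded[OF U2])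
  also have "\<dots> = measure_pmf.expectation \<mu> (\<lambda>\<omega>.
      measure_pmf.expectation (\<pi> \<omega>) (\<lambda>\<sigma>. measure_pmf.expectation (s \<sigma>) (uR \<omega>)))"
    by (subst integral_bind_pmf_bounded[OF U2]) (simp add: integral_map_pmf)
  finally show ?thesis by (simp add: exp_finite_sum)
qed

lemma pmf_expect_in_hull:
  fixes f :: "'b \<Rightarrow> 'e::euclidean_space" and P :: "'b pmf"
  assumes bnd: "\<And>\<sigma>. \<sigma> \<in> set_pmf P \<Longrightarrow> norm (f \<sigma>) \<le> B"
    and x: "\<And>a. inner a x = measure_pmf.expectation P (\<lambda>\<sigma>. inner a (f \<sigma>))"
  shows "x \<in> convex hull (f ` set_pmf P)"
proof -
  define K where "K = convex hull (f ` set_pmf P)"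
  have Kne: "K \<noteq> {}" unfolding K_def using set_pmf_not_empty by auto
  have cK: "convex K" unfolding K_def by simp
  obtain c where c: "c \<in> rel_interior K"
    using rel_interior_eq_empty[OF cK] Kne by blast
  have "c \<in> K" using c rel_interior_subset by blast
  then obtain T u where T: "finite T" "T \<subseteq> f ` set_pmf P" "\<forall>x\<in>T. 0 \<le> u x" "sum u T = 1"
    "(\<Sum>v\<in>T. u v *\<^sub>R v) = c"
    unfolding K_def convex_hull_explicit by blast
  define G where "G = inv_into (set_pmf P) f ` T"
  define w where "w \<sigma> = u (f \<sigma>)" for \<sigma>
  have GP: "G \<subseteq> set_pmf P" unfolding G_def using T(2) by (auto intro: inv_into_into)
  have fG: "\<And>\<sigma>. \<sigma> \<in> G \<Longrightarrow> f \<sigma> \<in> T" unfolding G_def using T(2) by (auto simp: f_inv_into_f)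
  have injG: "inj_on f G" unfolding G_def using T(2)
    by (smt (verit) f_inv_into_f imageE inj_onI subsetD)
  have imG: "f ` G = T" unfolding G_def using T(2)
    by (simp add: image_image f_inv_into_f subset_iff cong: image_cong)
  have finG: "finite G" unfolding G_def using T(1) by simp
  have wsum: "sum w G = 1" unfolding w_def using T(4) imG injG
    using sum.reindex[OF injG, of u] by (simp add: o_def)
  have csum: "(\<Sum>\<sigma>\<in>G. w \<sigma> *\<^sub>R f \<sigma>) = c" unfolding w_def using T(5) imG injG
    using sum.reindex[OF injG, of "\<lambda>v. u v *\<^sub>R v"] by (simp add: o_def)
  have wnn: "\<And>\<sigma>. \<sigma> \<in> G \<Longrightarrow> 0 \<le> w \<sigma>" unfolding w_def using T(3) fG by blast
  have wle1: "\<And>\<sigma>. \<sigma> \<in> G \<Longrightarrow> w \<sigma> \<le> 1"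
    using wsum wnn finG by (metis sum_nonneg_leq_bound)
  have ppos: "\<And>\<sigma>. \<sigma> \<in> G \<Longrightarrow> 0 < pmf P \<sigma>" using GP by (simp add: pmf_positive subset_iff)
  define \<epsilon> where "\<epsilon> = Min (insert (1/2) (pmf P ` G))"
  have eps_pos: "0 < \<epsilon>" unfolding \<epsilon>_def using finG ppos by (auto simp: Min_gr_iff)
  have eps_half: "\<epsilon> \<le> 1/2" unfolding \<epsilon>_def using finG by (intro Min_le) auto
  have eps_p: "\<And>\<sigma>. \<sigma> \<in> G \<Longrightarrow> \<epsilon> \<le> pmf P \<sigma>" unfolding \<epsilon>_def using finG by (intro Min_le) auto
  define h where "h \<sigma> = (if \<sigma> \<in> G then w \<sigma> / pmf P \<sigma> else 0)" for \<sigma>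
  have Eh: "measure_pmf.expectation P (\<lambda>\<sigma>. h \<sigma> * \<phi> \<sigma>) = (\<Sum>\<sigma>\<in>G. w \<sigma> * \<phi> \<sigma>)" for \<phi> :: "'b \<Rightarrow> real"
  proof -
    have "measure_pmf.expectation P (\<lambda>\<sigma>. h \<sigma> * \<phi> \<sigma>) = (\<Sum>\<sigma>\<in>G. h \<sigma> * \<phi> \<sigma> * pmf P \<sigma>)"
      by (rule integral_measure_pmf_real[OF finG]) (auto simp: h_def split: if_splits)
    also have "\<dots> = (\<Sum>\<sigma>\<in>G. w \<sigma> * \<phi> \<sigma>)"
    proof (rule sum.cong[OF refl])
      fix \<sigma> assume "\<sigma> \<in> G"
      then show "h \<sigma> * \<phi> \<sigma> * pmf P \<sigma> = w \<sigma> * \<phi> \<sigma>"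
        using ppos[of \<sigma>] by (simp add: h_def)
    qed
    finally show ?thesis .
  qed
  have hbdd: "\<bar>h \<sigma>\<bar> \<le> (\<Sum>\<sigma>\<in>G. \<bar>h \<sigma>\<bar>)" for \<sigma>
  proof (cases "\<sigma> \<in> G")
    case True
    show ?thesis by (rule member_le_sum[OF True]) (auto simp: finG)
  next
    case False
    then have "h \<sigma> = 0" by (simp add: h_def)
    then show ?thesis by (simp add: sum_nonneg)
  qed
  define y where "y = (1 / (1 - \<epsilon>)) *\<^sub>R (x - \<epsilon> *\<^sub>R c)"
  have y: "y \<in> closure K"
  proof (rule ccontr)
    assume "y \<notin> closure K"
    then obtain a b where ab: "inner a y < b" "\<forall>z\<in>closure K. b < inner a z"
      using separating_hyperplane_closed_point[of "closure K" y] cK by auto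
    have fb: "\<sigma> \<in> set_pmf P \<Longrightarrow> b < inner a (f \<sigma>)" for \<sigma>
      using ab(2) closure_subset hull_subset[of "f ` set_pmf P"] unfolding K_def by blast
    have ib: "\<sigma> \<in> set_pmf P \<Longrightarrow> \<bar>inner a (f \<sigma>)\<bar> \<le> norm a * B" for \<sigma>
      using Cauchy_Schwarz_ineq2[of a "f \<sigma>"] bnd[of \<sigma>] norm_ge_zero[of a]
      by (meson mult_left_mono order_trans)
    define g where "g \<sigma> = 1 - \<epsilon> * h \<sigma>" for \<sigma>
    have gnn: "\<sigma> \<in> set_pmf P \<Longrightarrow> 0 \<le> g \<sigma>" for \<sigma>
    proof (cases "\<sigma> \<in> G")
      case True
      have "\<epsilon> * (w \<sigma> / pmf P \<sigma>) \<le> w \<sigma>"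
        using eps_p[OF True] ppos[OF True] wnn[OF True]
        by (simp add: divide_simps mult.commute[of \<epsilon>] mult_left_mono)
      then show ?thesis using wle1[OF True] True by (simp add: g_def h_def)
    qed (simp add: g_def h_def)
    have int1: "integrable (measure_pmf P) (\<lambda>\<sigma>. inner a (f \<sigma>))"
      by (rule pmf_integrable_bdd[OF ib])
    have int2: "integrable (measure_pmf P) (\<lambda>\<sigma>. h \<sigma> * inner a (f \<sigma>))"
      apply (rule pmf_integrable_bdd[where C="(\<Sum>\<sigma>\<in>G. \<bar>h \<sigma>\<bar>) * (norm a * B)"])
      by (simp add: abs_mult hbdd ib mult_mono')
    have inth: "integrable (measure_pmf P) h"
      by (rule pmf_integrable_bdd[where C="(\<Sum>\<sigma>\<in>G. \<bar>h \<sigma>\<bar>)"]) (simp add: hbdd)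
    have Ehh: "measure_pmf.expectation P h = 1"
      using Eh[of "\<lambda>_. 1"] wsum by simp
    have "measure_pmf.expectation P (\<lambda>\<sigma>. g \<sigma> * inner a (f \<sigma>))
        = measure_pmf.expectation P (\<lambda>\<sigma>. inner a (f \<sigma>)) - \<epsilon> * measure_pmf.expectation P (\<lambda>\<sigma>. h \<sigma> * inner a (f \<sigma>))"
      using int1 int2 by (simp add: g_def left_diff_distrib mult.assoc)
    also have "\<dots> = inner a x - \<epsilon> * inner a c"
      using x Eh[of "\<lambda>\<sigma>. inner a (f \<sigma>)"] csum[symmetric]
      by (simp add: inner_sum_right)
    also have "\<dots> = (1 - \<epsilon>) * inner a y"
      using eps_half by (simp add: y_def inner_diff_right)
    finally have E1: "measure_pmf.expectation P (\<lambda>\<sigma>. g \<sigma> * inner a (f \<sigma>)) = (1 - \<epsilon>) * inner a y" .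
    have "measure_pmf.expectation P (\<lambda>\<sigma>. g \<sigma> * b) \<le> measure_pmf.expectation P (\<lambda>\<sigma>. g \<sigma> * inner a (f \<sigma>))"
    proof (rule integral_mono_AE)
      show "integrable (measure_pmf P) (\<lambda>\<sigma>. g \<sigma> * b)"
        using inth by (simp add: g_def left_diff_distrib)
      show "integrable (measure_pmf P) (\<lambda>\<sigma>. g \<sigma> * inner a (f \<sigma>))"
        using int1 int2 by (simp add: g_def left_diff_distrib mult.assoc)
      show "AE \<sigma> in measure_pmf P. g \<sigma> * b \<le> g \<sigma> * inner a (f \<sigma>)"
        using gnn fb by (auto simp: AE_measure_pmf_iff intro!: mult_left_mono dest: less_imp_le)
    qed
    moreover have "measure_pmf.expectation P (\<lambda>\<sigma>. g \<sigma> * b) = (1 - \<epsilon>) * b"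
      using inth Ehh by (simp add: g_def left_diff_distrib)
    ultimately have "(1 - \<epsilon>) * b \<le> (1 - \<epsilon>) * inner a y" using E1 by linarith
    then have "b \<le> inner a y" using eps_half by simp
    then show False using ab(1) by simp
  qed
  have e1: "(1 - \<epsilon>) *\<^sub>R y = x - \<epsilon> *\<^sub>R c"
    using eps_half by (simp add: y_def)
  have "x = (1 - \<epsilon>) *\<^sub>R y + \<epsilon> *\<^sub>R c" using e1 by simp
  also have "\<dots> = y - \<epsilon> *\<^sub>R (y - c)" by (simp add: scaleR_diff_left scaleR_diff_right)
  finally have "x = y - \<epsilon> *\<^sub>R (y - c)" .
  then have "x \<in> rel_interior K"
    using rel_interior_closure_convex_shrink[OF cK c y eps_pos] eps_half by simp
  then show ?thesis using rel_interior_subset K_def by blast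
qed

theorem mainTheorem9:
  fixes \<mu> :: "'w::finite pmf"
    and uS uR :: "'w \<Rightarrow> 'a::finite \<Rightarrow> real"
    and v :: real
  assumes sig_size: "infinite (UNIV :: 'sig set) \<or> CARD('w) + 1 \<le> CARD('sig)"
    and achieved: "\<exists>(\<pi> :: 'w \<Rightarrow> 'sig pmf) (s :: 'sig \<Rightarrow> 'a pmf).
                     cheap_talk_eq \<mu> uS uR \<pi> s \<and> receiver_utility \<mu> uR \<pi> s = v"
  shows "\<exists>(\<pi> :: 'w \<Rightarrow> 'sig pmf) (s :: 'sig \<Rightarrow> 'a pmf).
           cheap_talk_eq \<mu> uS uR \<pi> s \<and>
           finite (supp_sig \<mu> \<pi>) \<and> card (supp_sig \<mu> \<pi>) \<le> CARD('w) + 1 \<and>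
           receiver_utility \<mu> uR \<pi> s = v"
proof -
  obtain \<pi> :: "'w \<Rightarrow> 'sig pmf" and s :: "'sig \<Rightarrow> 'a pmf"
    where eq: "cheap_talk_eq \<mu> uS uR \<pi> s" and vv: "receiver_utility \<mu> uR \<pi> s = v"
    using achieved by blast
  define Q where "Q = bind_pmf \<mu> \<pi>"
  define S where "S = supp_sig \<mu> \<pi>"
  have SQ: "set_pmf Q = S" by (auto simp: Q_def S_def supp_sig_def)
  define den where "den \<sigma> = (\<Sum>\<omega>\<in>UNIV. pmf \<mu> \<omega> * pmf (\<pi> \<omega>) \<sigma>)" for \<sigma>
  have pQ: "pmf Q \<sigma> = den \<sigma>" for \<sigma> by (simp add: Q_def den_def pmf_bind_fin)
  define post where "post \<sigma> \<omega> = posterior \<mu> \<pi> \<sigma> \<omega>" for \<sigma> \<omega>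
  have post_def': "post \<sigma> \<omega> = pmf \<mu> \<omega> * pmf (\<pi> \<omega>) \<sigma> / den \<sigma>" for \<sigma> \<omega>
    by (simp add: post_def posterior_def den_def)
  have num_le: "pmf \<mu> \<omega> * pmf (\<pi> \<omega>) \<sigma> \<le> den \<sigma>" for \<omega> \<sigma>
    unfolding den_def by (rule member_le_sum) auto
  have den_nn: "0 \<le> den \<sigma>" for \<sigma> unfolding den_def by (auto intro: sum_nonneg)
  have post_nn: "0 \<le> post \<sigma> \<omega>" for \<sigma> \<omega> by (simp add: post_def' den_nn)
  have post_le1: "post \<sigma> \<omega> \<le> 1" for \<sigma> \<omega>
  proof (cases "den \<sigma> = 0")
    case False
    then show ?thesis using num_le[of \<omega> \<sigma>] den_nn[of \<sigma>] by (simp add: post_def' divide_le_eq_1)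
  qed (simp add: post_def')
  have kid: "den \<sigma> * post \<sigma> \<omega> = pmf \<mu> \<omega> * pmf (\<pi> \<omega>) \<sigma>" for \<sigma> \<omega>
  proof (cases "den \<sigma> = 0")
    case True
    have "0 \<le> pmf \<mu> \<omega> * pmf (\<pi> \<omega>) \<sigma>" by simp
    then have "pmf \<mu> \<omega> * pmf (\<pi> \<omega>) \<sigma> = 0" using num_le[of \<omega> \<sigma>] True by linarith
    then show ?thesis using True by simp
  qed (simp add: post_def')
  have den_pos: "\<sigma> \<in> S \<Longrightarrow> 0 < den \<sigma>" for \<sigma>
    using SQ pQ by (metis pmf_positive)
  have post_sum: "\<sigma> \<in> S \<Longrightarrow> (\<Sum>\<omega>\<in>UNIV. post \<sigma> \<omega>) = 1" for \<sigma>
    using den_pos[of \<sigma>] by (simp add: post_def' sum_divide_distrib[symmetric] den_def[symmetric])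
  define ER where "ER \<omega> \<sigma> = measure_pmf.expectation (s \<sigma>) (uR \<omega>)" for \<omega> \<sigma>
  define U where "U = (\<Sum>\<omega>\<in>UNIV. \<Sum>a\<in>UNIV. \<bar>uR \<omega> a\<bar>)"
  have U: "\<bar>uR \<omega> a\<bar> \<le> U" for \<omega> a
  proof -
    have "\<bar>uR \<omega> a\<bar> \<le> (\<Sum>a\<in>UNIV. \<bar>uR \<omega> a\<bar>)" by (rule member_le_sum) auto
    also have "\<dots> \<le> U" unfolding U_def by (rule member_le_sum) (auto intro: sum_nonneg)
    finally show ?thesis .
  qed
  have U0: "0 \<le> U" using U[of undefined undefined] by linarith
  have ERb: "\<bar>ER \<omega> \<sigma>\<bar> \<le> U" for \<omega> \<sigma> unfolding ER_def by (rule exp_abs_le) (rule U)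
  define r where "r \<sigma> = (\<Sum>\<omega>\<in>UNIV. post \<sigma> \<omega> * ER \<omega> \<sigma>)" for \<sigma>
  have rb: "\<bar>r \<sigma>\<bar> \<le> real CARD('w) * U" for \<sigma>
  proof -
    have "\<bar>r \<sigma>\<bar> \<le> (\<Sum>\<omega>\<in>UNIV. \<bar>post \<sigma> \<omega> * ER \<omega> \<sigma>\<bar>)" unfolding r_def by (rule sum_abs)
    also have "\<dots> \<le> (\<Sum>\<omega>\<in>(UNIV::'w set). U)"
    proof (rule sum_mono)
      fix \<omega>
      have "\<bar>post \<sigma> \<omega> * ER \<omega> \<sigma>\<bar> = post \<sigma> \<omega> * \<bar>ER \<omega> \<sigma>\<bar>" using post_nn by (simp add: abs_mult)
      also have "\<dots> \<le> 1 * U" using post_nn[of \<sigma> \<omega>] post_le1[of \<sigma> \<omega>] ERb[of \<omega> \<sigma>]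
        by (intro mult_mono) auto
      finally show "\<bar>post \<sigma> \<omega> * ER \<omega> \<sigma>\<bar> \<le> U" by simp
    qed
    finally show ?thesis by simp
  qed
  define f :: "'sig \<Rightarrow> (real^'w) \<times> real" where "f \<sigma> = (\<chi> \<omega>. post \<sigma> \<omega>, r \<sigma>)" for \<sigma>
  define x0 :: "(real^'w) \<times> real" where "x0 = (\<chi> \<omega>. pmf \<mu> \<omega>, v)"
  have Epost: "measure_pmf.expectation Q (\<lambda>\<sigma>. post \<sigma> \<omega>) = pmf \<mu> \<omega>" for \<omega>
  proof -
    have "measure_pmf.expectation Q (\<lambda>\<sigma>. post \<sigma> \<omega>)
        = integral\<^sup>L (count_space UNIV) (\<lambda>\<sigma>. pmf \<mu> \<omega> * pmf (\<pi> \<omega>) \<sigma>)"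
      by (simp add: exp_density pQ kid)
    also have "\<dots> = pmf \<mu> \<omega> * integral\<^sup>L (count_space UNIV) (\<lambda>\<sigma>. pmf (\<pi> \<omega>) \<sigma>)"
      by simp
    also have "\<dots> = pmf \<mu> \<omega>" by (simp add: integral_pmf)
    finally show ?thesis .
  qed
  have Er: "measure_pmf.expectation Q r = v"
  proof -
    have "measure_pmf.expectation Q r
        = integral\<^sup>L (count_space UNIV) (\<lambda>\<sigma>. \<Sum>\<omega>\<in>UNIV. pmf \<mu> \<omega> * (pmf (\<pi> \<omega>) \<sigma> * ER \<omega> \<sigma>))"
      unfolding exp_density
    proof (rule Bochner_Integration.integral_cong[OF refl])
      fix \<sigma>
      have "pmf Q \<sigma> * r \<sigma> = (\<Sum>\<omega>\<in>UNIV. (den \<sigma> * post \<sigma> \<omega>) * ER \<omega> \<sigma>)"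
        by (simp add: r_def pQ sum_distrib_left mult.assoc)
      also have "\<dots> = (\<Sum>\<omega>\<in>UNIV. pmf \<mu> \<omega> * (pmf (\<pi> \<omega>) \<sigma> * ER \<omega> \<sigma>))"
        by (simp add: kid mult.assoc)
      finally show "pmf Q \<sigma> * r \<sigma> = (\<Sum>\<omega>\<in>UNIV. pmf \<mu> \<omega> * (pmf (\<pi> \<omega>) \<sigma> * ER \<omega> \<sigma>))" .
    qed
    also have "\<dots> = (\<Sum>\<omega>\<in>UNIV. pmf \<mu> \<omega> * integral\<^sup>L (count_space UNIV) (\<lambda>\<sigma>. pmf (\<pi> \<omega>) \<sigma> * ER \<omega> \<sigma>))"
      by (subst Bochner_Integration.integral_sum) (auto intro!: int_density_bdd[where C=U] ERb)
    also have "\<dots> = (\<Sum>\<omega>\<in>UNIV. pmf \<mu> \<omega> * measure_pmf.expectation (\<pi> \<omega>) (\<lambda>\<sigma>. ER \<omega> \<sigma>))"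
      by (simp add: exp_density)
    also have "\<dots> = v" using vv by (simp add: RU ER_def)
    finally show ?thesis .
  qed
  have intpost: "integrable (measure_pmf Q) (\<lambda>\<sigma>. post \<sigma> \<omega>)" for \<omega>
    by (rule pmf_integrable_bdd[where C=1]) (use post_nn post_le1 in auto)
  have intr: "integrable (measure_pmf Q) r"
    by (rule pmf_integrable_bdd[where C="real CARD('w) * U"]) (use rb in auto)
  have inner_x0: "inner a x0 = measure_pmf.expectation Q (\<lambda>\<sigma>. inner a (f \<sigma>))" for a
  proof -
    obtain \<alpha> \<beta> where a: "a = (\<alpha>, \<beta>)" by (cases a)
    have "measure_pmf.expectation Q (\<lambda>\<sigma>. inner a (f \<sigma>))
       = measure_pmf.expectation Q (\<lambda>\<sigma>. (\<Sum>\<omega>\<in>UNIV. \<alpha> $ \<omega> * post \<sigma> \<omega>) + \<beta> * r \<sigma>)"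
      by (simp add: a f_def inner_vec_def)
    also have "\<dots> = (\<Sum>\<omega>\<in>UNIV. \<alpha> $ \<omega> * measure_pmf.expectation Q (\<lambda>\<sigma>. post \<sigma> \<omega>)) + \<beta> * measure_pmf.expectation Q r"
      using intpost intr by (simp add: Bochner_Integration.integral_sum)
    also have "\<dots> = inner a x0"
      by (simp add: Epost Er a x0_def inner_vec_def)
    finally show ?thesis by simp
  qed
  have fbnd: "norm (f \<sigma>) \<le> real CARD('w) + real CARD('w) * U" for \<sigma>
  proof -
    have "norm (f \<sigma>) \<le> norm ((\<chi> \<omega>. post \<sigma> \<omega>) :: real^'w) + norm (r \<sigma>)"
      unfolding f_def by (rule norm_Pair_le)
    moreover have "norm ((\<chi> \<omega>. post \<sigma> \<omega>) :: real^'w) \<le> (\<Sum>\<omega>\<in>(UNIV::'w set). 1)"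
      using norm_le_l1_cart[of "(\<chi> \<omega>. post \<sigma> \<omega>) :: real^'w"]
        sum_mono[of UNIV "\<lambda>\<omega>. \<bar>post \<sigma> \<omega>\<bar>" "\<lambda>_. 1"] post_nn post_le1
      by fastforce
    ultimately show ?thesis using rb[of \<sigma>] by simp
  qed
  have hull: "x0 \<in> convex hull (f ` S)"
    using pmf_expect_in_hull[of Q f, OF fbnd inner_x0] SQ by simp
  have aff: "aff_dim (f ` S) \<le> int CARD('w)"
  proof -
    define e :: "(real^'w) \<times> real" where "e = (\<chi> \<omega>. 1, 0)"
    have e0: "e \<noteq> 0" by (simp add: e_def vec_eq_iff zero_prod_def)
    have "f ` S \<subseteq> {z. inner e z = 1}"
      using post_sum by (auto simp: e_def f_def inner_vec_def)
    then have "aff_dim (f ` S) \<le> aff_dim {z. inner e z = 1}" by (rule aff_dim_subset)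
    also have "\<dots> = int CARD('w)" using e0 by simp
    finally show ?thesis .
  qed
  have "\<exists>T. finite T \<and> T \<subseteq> f ` S \<and> card T \<le> aff_dim (f ` S) + 1 \<and> x0 \<in> convex hull T"
    using hull unfolding caratheodory_aff_dim[of "f ` S"] mem_Collect_eq .
  then obtain T where T: "finite T" "T \<subseteq> f ` S" "card T \<le> aff_dim (f ` S) + 1" "x0 \<in> convex hull T"
    by (elim exE conjE) simp
  have cardT: "card T \<le> CARD('w) + 1" using T(3) aff by linarith
  have "\<exists>u. (\<forall>x\<in>T. 0 \<le> u x) \<and> sum u T = 1 \<and> (\<Sum>x\<in>T. u x *\<^sub>R x) = x0"
    using T(4) unfolding convex_hull_finite[OF T(1)] mem_Collect_eq .
  then obtain u where u: "\<forall>x\<in>T. 0 \<le> u x" "sum u T = 1" "(\<Sum>x\<in>T. u x *\<^sub>R x) = x0"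
    by (elim exE conjE) simp
  define S' where "S' = inv_into S f ` T"
  have S'S: "S' \<subseteq> S" unfolding S'_def using T(2) by (auto intro: inv_into_into)
  have fS': "\<And>\<sigma>. \<sigma> \<in> S' \<Longrightarrow> f \<sigma> \<in> T" unfolding S'_def using T(2) by (auto simp: f_inv_into_f)
  have injS': "inj_on f S'" unfolding S'_def using T(2)
    by (smt (verit) f_inv_into_f imageE inj_onI subsetD)
  have fi: "\<And>x. x \<in> T \<Longrightarrow> f (inv_into S f x) = x" using T(2) by (meson f_inv_into_f subsetD)
  have imS': "f ` S' = T"
  proof -
    have "f ` S' = (\<lambda>x. f (inv_into S f x)) ` T" by (simp add: S'_def image_image)
    also have "\<dots> = (\<lambda>x. x) ` T" by (rule image_cong[OF refl fi])
    finally show ?thesis by simp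
  qed
  have finS': "finite S'" unfolding S'_def using T(1) by simp
  have cardS': "card S' = card T" using card_image[OF injS'] imS' by simp
  define w where "w \<sigma> = u (f \<sigma>)" for \<sigma>
  have wnn: "\<And>\<sigma>. \<sigma> \<in> S' \<Longrightarrow> 0 \<le> w \<sigma>" unfolding w_def using u(1) fS' by blast
  have wsum: "sum w S' = 1" unfolding w_def using u(2) sum.reindex[OF injS', of u] imS' by (simp add: o_def)
  have vsum: "(\<Sum>\<sigma>\<in>S'. w \<sigma> *\<^sub>R f \<sigma>) = x0" unfolding w_def
    using u(3) sum.reindex[OF injS', of "\<lambda>x. u x *\<^sub>R x"] imS' by (simp add: o_def)
  have c1: "(\<Sum>\<sigma>\<in>S'. w \<sigma> * post \<sigma> \<omega>) = pmf \<mu> \<omega>" for \<omega>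
  proof -
    have "fst (\<Sum>\<sigma>\<in>S'. w \<sigma> *\<^sub>R f \<sigma>) $ \<omega> = fst x0 $ \<omega>" using vsum by simp
    then show ?thesis by (simp add: fst_sum f_def x0_def)
  qed
  have c2: "(\<Sum>\<sigma>\<in>S'. w \<sigma> * r \<sigma>) = v"
  proof -
    have "snd (\<Sum>\<sigma>\<in>S'. w \<sigma> *\<^sub>R f \<sigma>) = snd x0" using vsum by simp
    then show ?thesis by (simp add: snd_sum f_def x0_def)
  qed
  define D where "D = {\<sigma>\<in>S'. \<exists>\<omega>. 0 < pmf \<mu> \<omega> \<and> w \<sigma> * post \<sigma> \<omega> \<noteq> 0}"
  have DS': "D \<subseteq> S'" unfolding D_def by auto
  have finD: "finite D" using finite_subset[OF DS' finS'] .
  have cardD: "card D \<le> CARD('w) + 1" using card_mono[OF finS' DS'] cardS' cardT by simp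
  have Dne: "D \<noteq> {}"
  proof -
    obtain \<sigma> where \<sigma>: "\<sigma> \<in> S'" "w \<sigma> \<noteq> 0"
      using wsum by (metis sum.neutral zero_neq_one)
    have "\<sigma> \<in> S" using \<sigma>(1) S'S by auto
    then obtain \<omega> where \<omega>: "post \<sigma> \<omega> \<noteq> 0" using post_sum[of \<sigma>] by (metis sum.neutral zero_neq_one)
    then have "pmf \<mu> \<omega> \<noteq> 0" by (auto simp: post_def')
    then have "0 < pmf \<mu> \<omega>" using pmf_nonneg[of \<mu> \<omega>] by linarith
    then have "\<sigma> \<in> D" using \<sigma> \<omega> by (auto simp: D_def)
    then show ?thesis by auto
  qed
  define pf where "pf \<omega> \<sigma> = (if \<sigma> \<in> S' then w \<sigma> * post \<sigma> \<omega> / pmf \<mu> \<omega> else 0)" for \<omega> \<sigma>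
  define best where "best \<omega> = (SOME \<sigma>. \<sigma> \<in> D \<and> (\<forall>\<sigma>'\<in>D. sender_util uS s \<omega> \<sigma>' \<le> sender_util uS s \<omega> \<sigma>))" for \<omega>
  have best: "best \<omega> \<in> D \<and> (\<forall>\<sigma>'\<in>D. sender_util uS s \<omega> \<sigma>' \<le> sender_util uS s \<omega> (best \<omega>))" for \<omega>
  proof -
    have "Max (sender_util uS s \<omega> ` D) \<in> sender_util uS s \<omega> ` D"
      using finD Dne by (intro Max_in) auto
    then obtain \<sigma> where \<sigma>: "\<sigma> \<in> D" "sender_util uS s \<omega> \<sigma> = Max (sender_util uS s \<omega> ` D)" by auto
    have "\<forall>\<sigma>'\<in>D. sender_util uS s \<omega> \<sigma>' \<le> sender_util uS s \<omega> \<sigma>"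
      using \<sigma>(2) finD by auto
    then have "\<exists>\<sigma>. \<sigma> \<in> D \<and> (\<forall>\<sigma>'\<in>D. sender_util uS s \<omega> \<sigma>' \<le> sender_util uS s \<omega> \<sigma>)" using \<sigma>(1) by blast
    then show ?thesis unfolding best_def by (rule someI_ex)
  qed
  define \<pi>' where "\<pi>' \<omega> = (if 0 < pmf \<mu> \<omega> then embed_pmf (pf \<omega>) else return_pmf (best \<omega>))" for \<omega>
  have pf_nn: "0 \<le> pf \<omega> \<sigma>" for \<omega> \<sigma> using wnn post_nn by (simp add: pf_def)
  have pf_sum: "(\<integral>\<^sup>+\<sigma>. ennreal (pf \<omega> \<sigma>) \<partial>count_space UNIV) = 1" if pos: "0 < pmf \<mu> \<omega>" for \<omega>
  proof -
    have "(\<integral>\<^sup>+\<sigma>. ennreal (pf \<omega> \<sigma>) \<partial>count_space UNIV) = (\<Sum>\<sigma>\<in>S'. ennreal (pf \<omega> \<sigma>))"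
      by (rule nn_integral_count_space') (auto simp: finS' pf_def)
    also have "\<dots> = ennreal (\<Sum>\<sigma>\<in>S'. pf \<omega> \<sigma>)" by (rule sum_ennreal) (simp add: pf_nn)
    also have "(\<Sum>\<sigma>\<in>S'. pf \<omega> \<sigma>) = (\<Sum>\<sigma>\<in>S'. w \<sigma> * post \<sigma> \<omega>) / pmf \<mu> \<omega>"
      by (simp add: pf_def sum_divide_distrib)
    also have "\<dots> = 1" using pos by (simp add: c1)
    finally show ?thesis by simp
  qed
  have pmf_pi': "pmf (\<pi>' \<omega>) \<sigma> = pf \<omega> \<sigma>" if "0 < pmf \<mu> \<omega>" for \<omega> \<sigma>
    using that pmf_embed_pmf[of "pf \<omega>", OF pf_nn pf_sum[OF that]] by (simp add: \<pi>'_def)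
  have set_pi': "set_pmf (\<pi>' \<omega>) = {\<sigma>. pf \<omega> \<sigma> \<noteq> 0}" if "0 < pmf \<mu> \<omega>" for \<omega>
    using that set_embed_pmf[of "pf \<omega>", OF pf_nn pf_sum[OF that]] by (simp add: \<pi>'_def)
  have post0: "post \<sigma> \<omega> = 0" if "\<not> 0 < pmf \<mu> \<omega>" for \<sigma> \<omega>
  proof -
    have "pmf \<mu> \<omega> = 0" using that pmf_nonneg[of \<mu> \<omega>] by linarith
    then show ?thesis by (simp add: post_def')
  qed
  have NI: "pmf \<mu> \<omega> * pmf (\<pi>' \<omega>) \<sigma> = (if \<sigma> \<in> S' then w \<sigma> * post \<sigma> \<omega> else 0)" for \<omega> \<sigma>
  proof (cases "0 < pmf \<mu> \<omega>")
    case True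
    then show ?thesis by (simp add: pmf_pi' pf_def)
  next
    case False
    then have "pmf \<mu> \<omega> = 0" using pmf_nonneg[of \<mu> \<omega>] by linarith
    then show ?thesis using post0[OF False] by simp
  qed
  have suppD: "supp_sig \<mu> \<pi>' = D"
  proof -
    have "\<sigma> \<in> set_pmf (\<pi>' \<omega>) \<longleftrightarrow> \<sigma> \<in> S' \<and> w \<sigma> * post \<sigma> \<omega> \<noteq> 0" if "0 < pmf \<mu> \<omega>" for \<omega> \<sigma>
      using that by (simp add: set_pi' pf_def)
    moreover have "\<omega> \<in> set_pmf \<mu> \<longleftrightarrow> 0 < pmf \<mu> \<omega>" for \<omega>
      by (simp add: set_pmf_iff less_le)
    ultimately show ?thesis unfolding supp_sig_def D_def by auto
  qed
  have post': "posterior \<mu> \<pi>' \<sigma> \<omega> = post \<sigma> \<omega>" if "\<sigma> \<in> D" for \<sigma> \<omega>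
  proof -
    have \<sigma>: "\<sigma> \<in> S'" "w \<sigma> \<noteq> 0" using that by (auto simp: D_def)
    have "\<sigma> \<in> S" using \<sigma>(1) S'S by auto
    have "(\<Sum>\<omega>'\<in>UNIV. pmf \<mu> \<omega>' * pmf (\<pi>' \<omega>') \<sigma>) = (\<Sum>\<omega>'\<in>UNIV. w \<sigma> * post \<sigma> \<omega>')"
      using \<sigma>(1) by (simp add: NI)
    also have "\<dots> = w \<sigma>" using post_sum[OF \<open>\<sigma> \<in> S\<close>] by (simp add: sum_distrib_left[symmetric])
    finally show ?thesis using \<sigma> by (simp add: posterior_def NI)
  qed
  have eq': "cheap_talk_eq \<mu> uS uR \<pi>' s"
    unfolding cheap_talk_eq_def suppD
  proof (intro conjI allI impI ballI)
    fix \<omega> \<sigma> \<sigma>'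
    assume \<sigma>: "\<sigma> \<in> set_pmf (\<pi>' \<omega>)" and \<sigma>': "\<sigma>' \<in> D"
    show "sender_util uS s \<omega> \<sigma>' \<le> sender_util uS s \<omega> \<sigma>"
    proof (cases "0 < pmf \<mu> \<omega>")
      case True
      then have "\<sigma> \<in> S'" "w \<sigma> * post \<sigma> \<omega> \<noteq> 0" using \<sigma> by (auto simp: set_pi' pf_def split: if_splits)
      then have "pmf (\<pi> \<omega>) \<sigma> \<noteq> 0" by (auto simp: post_def')
      then have "\<sigma> \<in> set_pmf (\<pi> \<omega>)" by (simp add: set_pmf_iff)
      moreover have "\<sigma>' \<in> supp_sig \<mu> \<pi>" using \<sigma>' DS' S'S S_def by auto
      ultimately show ?thesis using eq unfolding cheap_talk_eq_def by blast
    next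
      case False
      then have "\<sigma> = best \<omega>" using \<sigma> by (simp add: \<pi>'_def)
      then show ?thesis using best \<sigma>' by blast
    qed
  next
    fix \<sigma> a a'
    assume \<sigma>: "\<sigma> \<in> D" and a: "a \<in> set_pmf (s \<sigma>)"
    have "\<sigma> \<in> supp_sig \<mu> \<pi>" using \<sigma> DS' S'S S_def by auto
    then have "(\<Sum>\<omega>\<in>UNIV. posterior \<mu> \<pi> \<sigma> \<omega> * uR \<omega> a') \<le> (\<Sum>\<omega>\<in>UNIV. posterior \<mu> \<pi> \<sigma> \<omega> * uR \<omega> a)"
      using eq a unfolding cheap_talk_eq_def by blast
    then show "(\<Sum>\<omega>\<in>UNIV. posterior \<mu> \<pi>' \<sigma> \<omega> * uR \<omega> a') \<le> (\<Sum>\<omega>\<in>UNIV. posterior \<mu> \<pi>' \<sigma> \<omega> * uR \<omega> a)"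
      using post'[OF \<sigma>] by (simp add: post_def)
  qed
  have util': "receiver_utility \<mu> uR \<pi>' s = v"
  proof -
    have trm: "pmf \<mu> \<omega> * measure_pmf.expectation (\<pi>' \<omega>) (\<lambda>\<sigma>. ER \<omega> \<sigma>)
        = (\<Sum>\<sigma>\<in>S'. w \<sigma> * (post \<sigma> \<omega> * ER \<omega> \<sigma>))" for \<omega>
    proof (cases "0 < pmf \<mu> \<omega>")
      case True
      have "measure_pmf.expectation (\<pi>' \<omega>) (\<lambda>\<sigma>. ER \<omega> \<sigma>) = (\<Sum>\<sigma>\<in>S'. ER \<omega> \<sigma> * pmf (\<pi>' \<omega>) \<sigma>)"
        by (rule integral_measure_pmf_real[OF finS']) (use True in \<open>auto simp: set_pi' pf_def split: if_splits\<close>)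
      then have "pmf \<mu> \<omega> * measure_pmf.expectation (\<pi>' \<omega>) (\<lambda>\<sigma>. ER \<omega> \<sigma>)
          = (\<Sum>\<sigma>\<in>S'. ER \<omega> \<sigma> * (pmf \<mu> \<omega> * pmf (\<pi>' \<omega>) \<sigma>))"
        by (simp add: sum_distrib_left mult.commute mult.left_commute)
      also have "\<dots> = (\<Sum>\<sigma>\<in>S'. w \<sigma> * (post \<sigma> \<omega> * ER \<omega> \<sigma>))"
        by (rule sum.cong[OF refl]) (simp add: NI)
      finally show ?thesis .
    next
      case False
      then have "pmf \<mu> \<omega> = 0" using pmf_nonneg[of \<mu> \<omega>] by linarith
      then show ?thesis using post0[OF False] by simp
    qed
    have "receiver_utility \<mu> uR \<pi>' s = (\<Sum>\<omega>\<in>UNIV. \<Sum>\<sigma>\<in>S'. w \<sigma> * (post \<sigma> \<omega> * ER \<omega> \<sigma>))"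
      using trm by (simp add: RU ER_def)
    also have "\<dots> = (\<Sum>\<sigma>\<in>S'. w \<sigma> * r \<sigma>)"
      by (subst sum.swap) (simp add: r_def sum_distrib_left)
    also have "\<dots> = v" by (rule c2)
    finally show ?thesis .
  qed
  show ?thesis
    using eq' finD cardD util' suppD by metis
qed

end
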